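(* Let $\mathbb{K}=(G,M,I)$ be a finite formal context. Then the concept lattice of the Birkhoff completion of $\mathbb{K}$ is isomorphic to the Birkhoff completion of the concept lattice of $\mathbb{K}$: $\underline{\mathfrak{B}}(BC(\mathbb{K}))\cong BC(\underline{\mathfrak{B}}(\mathbb{K}))$.
   Context: A formal context $\mathbb{K}=(G,M,I)$ has derivation operators $A'=\{m\in M\mid \forall g\in A:(g,m)\in I\}$ for $A\subseteq G$ and $B'=\{g\in G\mid\forall m\in B:(g,m)\in I\}$ for $B\subseteq M$; formal concepts are pairs $(A,B)$ with $A'=B$, $B'=A$, ordered by inclusion of extents, forming the concept lattice $\underline{\mathfrak{B}}(\mathbb{K})$. The attribute concept of $m$ is $\mu m=(\{m\}',\{m\}'')$. For $m,n\in M$ write $m\ge_{\mathbb{K}} n$ iff $\{m\}'\supseteq\{n\}'$. Let $\mathcal{M}(M)$ be the set of attributes $m\in M$ whose attribute concept $\mu m$ is meet-irreducible in $\underline{\mathfrak{B}}(\mathbb{K})$, and let $\overline{\mathcal{M}(M)}=\{\overline m\mid m\in\mathcal{M}(M)\}$ be a set of new elements (disjoint copies, disjoint from $G$). The Birkhoff completion of $\mathbb{K}$ is the context $BC(\mathbb{K}):=\big(G\cup\overline{\mathcal{M}(M)},\,M,\,I\cup\{(\overline m,n)\in\overline{\mathcal{M}(M)}\times M\mid m\not\ge_{\mathbb{K}} n\}\big)$. For a finite lattice $L$ with set $\mathcal{M}(L)$ of meet-irreducible elements, $BC(L):=(\mathcal{F}(\mathcal{M}(L)),\supseteq)$, the order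 filters of $\mathcal{M}(L)$ ordered by reverse inclusion. *)

theory Defs
  imports Main
begin

definition ext_der :: "'m set \<Rightarrow> ('g \<times> 'm) set \<Rightarrow> 'g set \<Rightarrow> 'm set" where
  "ext_der M I A = {m \<in> M. \<forall>g\<in>A. (g, m) \<in> I}"

definition int_der :: "'g set \<Rightarrow> ('g \<times> 'm) set \<Rightarrow> 'm set \<Rightarrow> 'g set" where
  "int_der G I B = {g \<in> G. \<forall>m\<in>B. (g, m) \<in> I}"

definition concepts :: "'g set \<Rightarrow> 'm set \<Rightarrow> ('g \<times> 'm) set \<Rightarrow> ('g set \<times> 'm set) set" where
  "concepts G M I = {(A, B). A \<subseteq> G \<and> B \<subseteq> M \<and> ext_der M I A = B \<and> int_der G I B = A}"

definition concept_le :: "('g set \<times> 'm set) \<Rightarrow> ('g set \<times> 'm set) \<Rightarrow> bool" where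
  "concept_le c d \<longleftrightarrow> fst c \<subseteq> fst d"

definition attr_concept :: "'g set \<Rightarrow> 'm set \<Rightarrow> ('g \<times> 'm) set \<Rightarrow> 'm \<Rightarrow> ('g set \<times> 'm set)" where
  "attr_concept G M I m = (int_der G I {m}, ext_der M I (int_der G I {m}))"

definition is_meet :: "'a set \<Rightarrow> ('a \<Rightarrow> 'a \<Rightarrow> bool) \<Rightarrow> 'a \<Rightarrow> 'a \<Rightarrow> 'a \<Rightarrow> bool" where
  "is_meet P le x a b \<longleftrightarrow> x \<in> P \<and> le x a \<and> le x b \<and> (\<forall>c\<in>P. le c a \<and> le c b \<longrightarrow> le c x)"

definition meet_irreducible :: "'a set \<Rightarrow> ('a \<Rightarrow> 'a \<Rightarrow> bool) \<Rightarrow> 'a \<Rightarrow> bool" where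
  "meet_irreducible P le x \<longleftrightarrow> x \<in> P \<and> (\<exists>y\<in>P. \<not> le y x) \<and>
     (\<forall>a\<in>P. \<forall>b\<in>P. is_meet P le x a b \<longrightarrow> x = a \<or> x = b)"

definition meet_irr_set :: "'a set \<Rightarrow> ('a \<Rightarrow> 'a \<Rightarrow> bool) \<Rightarrow> 'a set" where
  "meet_irr_set P le = {x \<in> P. meet_irreducible P le x}"

definition MI_attrs :: "'g set \<Rightarrow> 'm set \<Rightarrow> ('g \<times> 'm) set \<Rightarrow> 'm set" where
  "MI_attrs G M I = {m \<in> M. meet_irreducible (concepts G M I) concept_le (attr_concept G M I m)}"

text \<open>Birkhoff completion of a context. Objects: Inl g for g in G, Inr m (the copy m-bar)
  for m in MI_attrs. m >=_K n iff {m}' \<supseteq> {n}'.\<close>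
definition BC_obj :: "'g set \<Rightarrow> 'm set \<Rightarrow> ('g \<times> 'm) set \<Rightarrow> ('g + 'm) set" where
  "BC_obj G M I = Inl ` G \<union> Inr ` MI_attrs G M I"

definition BC_inc :: "'g set \<Rightarrow> 'm set \<Rightarrow> ('g \<times> 'm) set \<Rightarrow> (('g + 'm) \<times> 'm) set" where
  "BC_inc G M I = {(Inl g, m) | g m. (g, m) \<in> I} \<union>
     {(Inr m, n) | m n. m \<in> MI_attrs G M I \<and> n \<in> M \<and>
        \<not> (int_der G I {n} \<subseteq> int_der G I {m})}"

text \<open>Birkhoff completion of a finite lattice: order filters of its meet-irreducibles
  (w.r.t. the induced order), ordered by reverse inclusion.\<close>
definition order_filters :: "'a set \<Rightarrow> ('a \<Rightarrow> 'a \<Rightarrow> bool) \<Rightarrow> 'a set set" where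
  "order_filters Q le = {F. F \<subseteq> Q \<and> (\<forall>x\<in>F. \<forall>y\<in>Q. le x y \<longrightarrow> y \<in> F)}"

definition BC_lattice :: "'a set \<Rightarrow> ('a \<Rightarrow> 'a \<Rightarrow> bool) \<Rightarrow> 'a set set" where
  "BC_lattice P le = order_filters (meet_irr_set P le) le"

definition order_iso :: "'a set \<Rightarrow> ('a \<Rightarrow> 'a \<Rightarrow> bool) \<Rightarrow> 'b set \<Rightarrow> ('b \<Rightarrow> 'b \<Rightarrow> bool) \<Rightarrow> bool" where
  "order_iso P leP Q leQ \<longleftrightarrow> (\<exists>f. bij_betw f P Q \<and> (\<forall>x\<in>P. \<forall>y\<in>P. leP x y \<longleftrightarrow> leQ (f x) (f y)))"

end

theory Submission
  imports Defs
begin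

lemma concept_eqs:
  assumes "c \<in> concepts G M I"
  shows "fst c \<subseteq> G" "snd c \<subseteq> M" "ext_der M I (fst c) = snd c" "int_der G I (snd c) = fst c"
  using assms by (auto simp: concepts_def)

lemma concept_ext_eq:
  assumes "c \<in> concepts G M I" "d \<in> concepts G M I" "fst c = fst d"
  shows "c = d"
  using concept_eqs[OF assms(1)] concept_eqs[OF assms(2)] assms(3) by (metis prod.collapse)

lemma concept_of_intent:
  assumes "B \<subseteq> M"
  shows "(int_der G I B, ext_der M I (int_der G I B)) \<in> concepts G M I"
  using assms unfolding concepts_def int_der_def ext_der_def by auto

lemma attr_in: "m \<in> M \<Longrightarrow> attr_concept G M I m \<in> concepts G M I"
  unfolding attr_concept_def by (rule concept_of_intent) auto

lemma attr_fst: "fst (attr_concept G M I m) = int_der G I {m}"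
  by (simp add: attr_concept_def)

lemma attr_snd_mem: "m \<in> M \<Longrightarrow> m \<in> snd (attr_concept G M I m)"
  by (auto simp: attr_concept_def ext_der_def int_der_def)

lemma meet_concept:
  assumes "a \<in> concepts G M I" "b \<in> concepts G M I"
  shows "(fst a \<inter> fst b, ext_der M I (fst a \<inter> fst b)) \<in> concepts G M I"
    "is_meet (concepts G M I) concept_le (fst a \<inter> fst b, ext_der M I (fst a \<inter> fst b)) a b"
proof -
  have "fst a \<inter> fst b = int_der G I (snd a \<union> snd b)"
    using concept_eqs[OF assms(1)] concept_eqs[OF assms(2)] unfolding int_der_def by auto
  moreover have "snd a \<union> snd b \<subseteq> M" using concept_eqs[OF assms(1)] concept_eqs[OF assms(2)] by auto
  ultimately show c: "(fst a \<inter> fst b, ext_der M I (fst a \<inter> fst b)) \<in> concepts G M I"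
    using concept_of_intent by metis
  show "is_meet (concepts G M I) concept_le (fst a \<inter> fst b, ext_der M I (fst a \<inter> fst b)) a b"
    using c unfolding is_meet_def concept_le_def by auto
qed

lemma finite_concepts:
  assumes "finite G" "finite M"
  shows "finite (concepts G M I)"
proof -
  have "concepts G M I \<subseteq> Pow G \<times> Pow M" unfolding concepts_def by auto
  thus ?thesis using assms by (meson finite_Pow_iff finite_SigmaI finite_subset)
qed

lemma K1:
  assumes fin: "finite G" "finite M"
    and x: "x \<in> concepts G M I" and g: "g \<in> G"
    and H: "\<forall>d\<in>meet_irr_set (concepts G M I) concept_le. fst x \<subseteq> fst d \<longrightarrow> g \<in> fst d"
  shows "g \<in> fst x"
proof (rule ccontr)
  assume gx: "g \<notin> fst x"
  define S where "S = {y \<in> concepts G M I. fst x \<subseteq> fst y \<and> g \<notin> fst y}"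
  have "finite S" using finite_concepts[OF fin] unfolding S_def by auto
  hence fS: "finite (fst ` S)" by simp
  have "x \<in> S" using x gx unfolding S_def by auto
  hence "fst ` S \<noteq> {}" by auto
  from finite_has_maximal[OF fS this] obtain E where E: "E \<in> fst ` S"
    and Emax: "\<forall>b\<in>fst ` S. E \<subseteq> b \<longrightarrow> E = b" by blast
  then obtain y where y: "y \<in> S" "fst y = E" by auto
  have yc: "y \<in> concepts G M I" and xy: "fst x \<subseteq> fst y" and gy: "g \<notin> fst y"
    using y unfolding S_def by auto
  have above: "g \<in> fst a" if "a \<in> concepts G M I" "fst y \<subseteq> fst a" "a \<noteq> y" for a
  proof (rule ccontr)
    assume "g \<notin> fst a"
    hence "a \<in> S" using that xy unfolding S_def by auto
    hence "fst a = fst y" using Emax y that by auto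
    thus False using concept_ext_eq[OF that(1) yc] that by auto
  qed
  have "meet_irreducible (concepts G M I) concept_le y"
  proof -
    have False if "y \<in> meet_irr_set (concepts G M I) concept_le"
      using H that xy gy by auto
    hence "\<not> meet_irreducible (concepts G M I) concept_le y"
      using yc unfolding meet_irr_set_def by blast
    have topc: "(G, ext_der M I G) \<in> concepts G M I"
      using concept_of_intent[of "{}" M G I] by (simp add: int_der_def)
    have ex: "\<exists>z\<in>concepts G M I. \<not> concept_le z y"
      by (rule bexI[OF _ topc]) (use g gy in \<open>auto simp: concept_le_def\<close>)
    have "\<not> (\<forall>a\<in>concepts G M I. \<forall>b\<in>concepts G M I. is_meet (concepts G M I) concept_le y a b \<longrightarrow> y = a \<or> y = b)"
      using \<open>\<not> meet_irreducible (concepts G M I) concept_le y\<close> yc ex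
      unfolding meet_irreducible_def by simp
    then obtain a b where ab: "a \<in> concepts G M I" "b \<in> concepts G M I"
      "is_meet (concepts G M I) concept_le y a b" "y \<noteq> a" "y \<noteq> b"
      by blast
    have ga: "g \<in> fst a" using above[OF ab(1)] ab(3,4) unfolding is_meet_def concept_le_def by blast
    have gb: "g \<in> fst b" using above[OF ab(2)] ab(3,5) unfolding is_meet_def concept_le_def by blast
    define gc where "gc = (int_der G I (ext_der M I {g}), ext_der M I (int_der G I (ext_der M I {g})))"
    have gcc: "gc \<in> concepts G M I" unfolding gc_def by (rule concept_of_intent) (auto simp: ext_der_def)
    have gin: "g \<in> fst gc" using g unfolding gc_def int_der_def ext_der_def by auto
    have sub: "fst gc \<subseteq> fst z" if "z \<in> concepts G M I" "g \<in> fst z" for z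
    proof -
      have sz: "snd z = ext_der M I (fst z)" using concept_eqs(3)[OF that(1)] by simp
      have "snd z \<subseteq> ext_der M I {g}" using that(2) unfolding sz ext_der_def by blast
      hence "int_der G I (ext_der M I {g}) \<subseteq> int_der G I (snd z)" unfolding int_der_def by blast
      thus ?thesis using concept_eqs[OF that(1)] unfolding gc_def by simp
    qed
    have "concept_le gc y" using ab(3) gcc sub[OF ab(1) ga] sub[OF ab(2) gb]
      unfolding is_meet_def concept_le_def by blast
    hence False using gin gy unfolding concept_le_def by auto
    thus ?thesis by simp
  qed
  thus False using H yc xy gy unfolding meet_irr_set_def by blast
qed


lemma K2:
  assumes fin: "finite G" "finite M" and d: "c \<in> meet_irr_set (concepts G M I) concept_le"
  shows "\<exists>m\<in>M. c = attr_concept G M I m"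
proof (rule ccontr)
  assume nm: "\<not> (\<exists>m\<in>M. c = attr_concept G M I m)"
  have cc: "c \<in> concepts G M I" and mi: "meet_irreducible (concepts G M I) concept_le c"
    using d unfolding meet_irr_set_def by auto
  define U where "U = {d \<in> concepts G M I. fst c \<subseteq> fst d \<and> fst c \<noteq> fst d}"
  have topc: "(G, ext_der M I G) \<in> concepts G M I"
    using concept_of_intent[of "{}" M G I] by (simp add: int_der_def)
  have "fst c \<noteq> G"
  proof
    assume cG: "fst c = G"
    from mi obtain z where z: "z \<in> concepts G M I" "\<not> concept_le z c"
      unfolding meet_irreducible_def by blast
    then show False using concept_eqs(1)[OF z(1)] cG unfolding concept_le_def by auto
  qed
  hence "(G, ext_der M I G) \<in> U" using topc concept_eqs(1)[OF cc] unfolding U_def by auto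
  hence Une: "fst ` U \<noteq> {}" by blast
  have "finite U" using finite_concepts[OF fin, of I] unfolding U_def by (rule finite_subset[rotated]) blast
  hence fU: "finite (fst ` U)" by simp
  from finite_has_minimal[OF fU Une] obtain E where E: "E \<in> fst ` U"
    and Emin: "\<forall>b\<in>fst ` U. b \<subseteq> E \<longrightarrow> E = b" by blast
  then obtain cs where csU: "cs \<in> U" and csE: "fst cs = E" by blast
  have csc: "cs \<in> concepts G M I" using csU unfolding U_def by blast
  have below: "fst cs \<subseteq> fst d" if dU: "d \<in> U" for d
  proof -
    have dc: "d \<in> concepts G M I" using dU unfolding U_def by blast
    let ?e = "(fst cs \<inter> fst d, ext_der M I (fst cs \<inter> fst d))"
    have ec: "?e \<in> concepts G M I" and em: "is_meet (concepts G M I) concept_le ?e cs d"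
      using meet_concept[OF csc dc] by auto
    have "c \<noteq> ?e"
    proof
      assume "c = ?e"
      then have "c = cs \<or> c = d" using mi csc dc em unfolding meet_irreducible_def by blast
      then show False using csU dU unfolding U_def by auto
    qed
    have "fst c \<subseteq> fst ?e" using csU dU unfolding U_def by auto
    moreover have "fst c \<noteq> fst ?e" using concept_ext_eq[OF cc ec] \<open>c \<noteq> ?e\<close> by blast
    ultimately have "?e \<in> U" using ec unfolding U_def by blast
    hence "fst ?e \<in> fst ` U" by (rule imageI)
    moreover have "fst ?e \<subseteq> E" using csE by auto
    ultimately have "E = fst ?e" using Emin by blast
    thus ?thesis using csE by auto
  qed
  have "fst cs \<subseteq> fst c"
  proof
    fix g assume g: "g \<in> fst cs"
    have gG: "g \<in> G" using g concept_eqs(1)[OF csc] by blast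
    have "\<forall>m\<in>snd c. (g, m) \<in> I"
    proof
      fix m assume m: "m \<in> snd c"
      have mM: "m \<in> M" using concept_eqs(2)[OF cc] m by blast
      have sc: "snd c = ext_der M I (fst c)" using concept_eqs(3)[OF cc] by simp
      have sub: "fst c \<subseteq> int_der G I {m}"
        using m concept_eqs(1)[OF cc] unfolding sc ext_der_def int_der_def by blast
      have "c \<noteq> attr_concept G M I m" using nm mM by blast
      hence "fst c \<noteq> int_der G I {m}"
        using concept_ext_eq[OF cc attr_in[OF mM]] attr_fst by metis
      hence "attr_concept G M I m \<in> U" using attr_in[OF mM, of G I] sub unfolding U_def by (simp add: attr_fst)
      hence "fst cs \<subseteq> int_der G I {m}" using below attr_fst by metis
      thus "(g, m) \<in> I" using g unfolding int_der_def by blast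
    qed
    hence "g \<in> int_der G I (snd c)" using gG unfolding int_der_def by blast
    thus "g \<in> fst c" using concept_eqs(4)[OF cc] by simp
  qed
  moreover have "fst c \<subseteq> fst cs" "fst c \<noteq> fst cs" using csU unfolding U_def by auto
  ultimately show False by blast
qed

lemma BC_inc_Inl[simp]: "(Inl g, m) \<in> BC_inc G M I \<longleftrightarrow> (g, m) \<in> I"
  by (auto simp: BC_inc_def)

lemma BC_inc_Inr[simp]: "(Inr k, n) \<in> BC_inc G M I \<longleftrightarrow>
   k \<in> MI_attrs G M I \<and> n \<in> M \<and> \<not> int_der G I {n} \<subseteq> int_der G I {k}"
  by (auto simp: BC_inc_def)

lemma L1:
  assumes c: "c \<in> concepts (BC_obj G M I) M (BC_inc G M I)" and n: "n \<in> snd c" and k: "k \<in> M"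
    and nk: "int_der G I {n} \<subseteq> int_der G I {k}" and IGM: "I \<subseteq> G \<times> M"
  shows "k \<in> snd c"
proof -
  have eq: "snd c = ext_der M (BC_inc G M I) (fst c)" using concept_eqs(3)[OF c] by simp
  have "\<forall>ob\<in>fst c. (ob, k) \<in> BC_inc G M I"
  proof
    fix ob assume ob: "ob \<in> fst c"
    have on: "(ob, n) \<in> BC_inc G M I" using n ob unfolding eq ext_der_def by blast
    show "(ob, k) \<in> BC_inc G M I"
    proof (cases ob)
      case (Inl g)
      then have "(g, n) \<in> I" using on by simp
      hence "g \<in> int_der G I {n}" using IGM unfolding int_der_def by auto
      hence "g \<in> int_der G I {k}" using nk by blast
      thus ?thesis using Inl unfolding int_der_def by simp
    next
      case (Inr j)
      then show ?thesis using on nk k by auto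
    qed
  qed
  thus ?thesis using k unfolding eq ext_der_def by blast
qed

lemma L2:
  assumes fin: "finite G" "finite M" and IGM: "I \<subseteq> G \<times> M"
    and c: "c \<in> concepts (BC_obj G M I) M (BC_inc G M I)" and n: "n \<in> M"
    and H: "\<forall>d\<in>meet_irr_set (concepts G M I) concept_le. int_der G I {n} \<subseteq> fst d \<longrightarrow> snd d \<subseteq> snd c"
  shows "n \<in> snd c"
proof -
  have eq: "snd c = ext_der M (BC_inc G M I) (fst c)" using concept_eqs(3)[OF c] by simp
  have "\<forall>ob\<in>fst c. (ob, n) \<in> BC_inc G M I"
  proof
    fix ob assume ob: "ob \<in> fst c"
    have "ob \<in> int_der (BC_obj G M I) (BC_inc G M I) (snd c)" using ob concept_eqs(4)[OF c] by simp
    hence oB: "ob \<in> BC_obj G M I" and oall: "\<forall>b\<in>snd c. (ob, b) \<in> BC_inc G M I"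
      unfolding int_der_def by auto
    show "(ob, n) \<in> BC_inc G M I"
    proof (cases ob)
      case (Inl g)
      have gG: "g \<in> G" using oB Inl unfolding BC_obj_def by auto
      have "g \<in> fst (attr_concept G M I n)"
      proof (rule K1[OF fin attr_in[OF n] gG], intro ballI impI)
        fix d assume d: "d \<in> meet_irr_set (concepts G M I) concept_le"
          "fst (attr_concept G M I n) \<subseteq> fst d"
        have dc: "d \<in> concepts G M I" using d(1) unfolding meet_irr_set_def by auto
        have "snd d \<subseteq> snd c" using H d attr_fst by metis
        hence "\<forall>b\<in>snd d. (g, b) \<in> I" using oall Inl by auto
        hence "g \<in> int_der G I (snd d)" using gG unfolding int_der_def by auto
        thus "g \<in> fst d" using concept_eqs(4)[OF dc] by simp
      qed
      hence "(g, n) \<in> I" unfolding attr_fst int_der_def by auto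
      thus ?thesis using Inl by simp
    next
      case (Inr j)
      have j: "j \<in> MI_attrs G M I" using oB Inr unfolding BC_obj_def by auto
      have jM: "j \<in> M" using j unfolding MI_attrs_def by auto
      have "\<not> int_der G I {n} \<subseteq> int_der G I {j}"
      proof
        assume sub: "int_der G I {n} \<subseteq> int_der G I {j}"
        have "attr_concept G M I j \<in> meet_irr_set (concepts G M I) concept_le"
          using j attr_in[OF jM] unfolding MI_attrs_def meet_irr_set_def by auto
        hence "snd (attr_concept G M I j) \<subseteq> snd c" using H sub attr_fst by metis
        hence "j \<in> snd c" using attr_snd_mem[OF jM] by blast
        hence "(Inr j, j) \<in> BC_inc G M I" using oall Inr by blast
        thus False by simp
      qed
      thus ?thesis using Inr j n by simp
    qed
  qed
  thus ?thesis using n unfolding eq ext_der_def by blast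
qed


lemma ext_anti: "A \<subseteq> A' \<Longrightarrow> ext_der M I A' \<subseteq> ext_der M I A"
  unfolding ext_der_def by blast

lemma int_anti: "B \<subseteq> B' \<Longrightarrow> int_der G I B' \<subseteq> int_der G I B"
  unfolding int_der_def by blast

lemma concept_le_iff:
  assumes "c1 \<in> concepts G M I" "c2 \<in> concepts G M I"
  shows "fst c1 \<subseteq> fst c2 \<longleftrightarrow> snd c2 \<subseteq> snd c1"
  using ext_anti[of "fst c1" "fst c2" M I] int_anti[of "snd c2" "snd c1" G I]
    concept_eqs[OF assms(1)] concept_eqs[OF assms(2)] by auto

lemma L3:
  assumes fin: "finite G" "finite M" and IGM: "I \<subseteq> G \<times> M"
    and F: "F \<in> BC_lattice (concepts G M I) concept_le"
  shows "\<exists>c\<in>concepts (BC_obj G M I) M (BC_inc G M I).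
     {d \<in> meet_irr_set (concepts G M I) concept_le. snd d \<subseteq> snd c} = F"
proof -
  let ?MIS = "meet_irr_set (concepts G M I) concept_le"
  have Fsub: "F \<subseteq> ?MIS" and Fup: "\<forall>x\<in>F. \<forall>y\<in>?MIS. concept_le x y \<longrightarrow> y \<in> F"
    using F unfolding BC_lattice_def order_filters_def by auto
  define BF where "BF = {n \<in> M. \<forall>d\<in>?MIS. int_der G I {n} \<subseteq> fst d \<longrightarrow> d \<in> F}"
  let ?A = "int_der (BC_obj G M I) (BC_inc G M I) BF"
  have ext: "ext_der M (BC_inc G M I) ?A = BF"
  proof
    show "BF \<subseteq> ext_der M (BC_inc G M I) ?A"
      unfolding BF_def ext_der_def int_der_def by auto
  next
    show "ext_der M (BC_inc G M I) ?A \<subseteq> BF"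
    proof
      fix n assume n: "n \<in> ext_der M (BC_inc G M I) ?A"
      have nM: "n \<in> M" using n unfolding ext_der_def by blast
      show "n \<in> BF"
      proof (rule ccontr)
        assume "n \<notin> BF"
        then obtain d where d: "d \<in> ?MIS" "int_der G I {n} \<subseteq> fst d" "d \<notin> F"
          using nM unfolding BF_def by blast
        obtain m where m: "m \<in> M" "d = attr_concept G M I m" using K2[OF fin d(1)] by blast
        have mMI: "m \<in> MI_attrs G M I" using d(1) m unfolding meet_irr_set_def MI_attrs_def by auto
        have "Inr m \<in> ?A"
        proof -
          have "Inr m \<in> BC_obj G M I" using mMI unfolding BC_obj_def by blast
          moreover have "\<forall>b\<in>BF. (Inr m, b) \<in> BC_inc G M I"
          proof
            fix b assume b: "b \<in> BF"
            have "\<not> int_der G I {b} \<subseteq> int_der G I {m}"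
            proof
              assume "int_der G I {b} \<subseteq> int_der G I {m}"
              hence "int_der G I {b} \<subseteq> fst d" using m(2) attr_fst by metis
              hence "d \<in> F" using b d(1) unfolding BF_def by blast
              thus False using d(3) by blast
            qed
            thus "(Inr m, b) \<in> BC_inc G M I" using mMI b unfolding BF_def by simp
          qed
          ultimately show ?thesis unfolding int_der_def by blast
        qed
        hence "(Inr m, n) \<in> BC_inc G M I" using n unfolding ext_der_def by blast
        hence "\<not> int_der G I {n} \<subseteq> int_der G I {m}" by simp
        thus False using d(2) m(2) attr_fst by metis
      qed
    qed
  qed
  have BFM: "BF \<subseteq> M" unfolding BF_def by blast
  have cc: "(?A, BF) \<in> concepts (BC_obj G M I) M (BC_inc G M I)"
    using ext BFM unfolding concepts_def by (auto simp: int_der_def)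
  have "{d \<in> ?MIS. snd d \<subseteq> BF} = F"
  proof (intro equalityI subsetI)
    fix d assume "d \<in> {d \<in> ?MIS. snd d \<subseteq> BF}"
    hence d: "d \<in> ?MIS" "snd d \<subseteq> BF" by auto
    obtain m where m: "m \<in> M" "d = attr_concept G M I m" using K2[OF fin d(1)] by blast
    have "m \<in> BF" using d(2) attr_snd_mem[OF m(1)] m(2) by blast
    moreover have "int_der G I {m} \<subseteq> fst d" using m(2) by (simp add: attr_fst)
    ultimately show "d \<in> F" using d(1) unfolding BF_def by blast
  next
    fix d assume dF: "d \<in> F"
    have dM: "d \<in> ?MIS" using dF Fsub by blast
    have dc: "d \<in> concepts G M I" using dM unfolding meet_irr_set_def by blast
    have "snd d \<subseteq> BF"
    proof
      fix n assume n: "n \<in> snd d"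
      have nM: "n \<in> M" using n concept_eqs(2)[OF dc] by blast
      have sd: "snd d = ext_der M I (fst d)" using concept_eqs(3)[OF dc] by simp
      have fd: "fst d \<subseteq> int_der G I {n}"
        using n concept_eqs(1)[OF dc] unfolding sd ext_der_def int_der_def by blast
      show "n \<in> BF" unfolding BF_def
      proof (intro CollectI conjI ballI impI nM)
        fix d' assume d': "d' \<in> ?MIS" "int_der G I {n} \<subseteq> fst d'"
        have "concept_le d d'" using fd d'(2) unfolding concept_le_def by blast
        thus "d' \<in> F" using Fup dF d'(1) by blast
      qed
    qed
    thus "d \<in> {d \<in> ?MIS. snd d \<subseteq> BF}" using dM by blast
  qed
  thus ?thesis using cc by (intro bexI[OF _ cc]) simp
qed

theorem mainTheorem5:
  fixes G :: "'g set" and M :: "'m set" and I :: "('g \<times> 'm) set"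
  assumes "finite G" and "finite M" and "I \<subseteq> G \<times> M"
  shows "order_iso
           (concepts (BC_obj G M I) M (BC_inc G M I)) concept_le
           (BC_lattice (concepts G M I) concept_le) (\<lambda>F1 F2. F2 \<subseteq> F1)"
proof -
  note fin = assms(1,2) and IGM = assms(3)
  let ?MIS = "meet_irr_set (concepts G M I) concept_le"
  let ?C = "concepts (BC_obj G M I) M (BC_inc G M I)"
  define \<Phi> where "\<Phi> c = {d \<in> ?MIS. snd d \<subseteq> snd c}" for c :: "('g + 'm) set \<times> 'm set"
  have into: "\<Phi> c \<in> BC_lattice (concepts G M I) concept_le" for c
    unfolding BC_lattice_def order_filters_def
  proof (intro CollectI conjI ballI impI)
    show "\<Phi> c \<subseteq> ?MIS" unfolding \<Phi>_def by blast
  next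
    fix x y assume x: "x \<in> \<Phi> c" and y: "y \<in> ?MIS" and xy: "concept_le x y"
    have xc: "x \<in> concepts G M I" and yc: "y \<in> concepts G M I"
      using x y unfolding \<Phi>_def meet_irr_set_def by auto
    have "snd y \<subseteq> snd x" using concept_le_iff[OF xc yc] xy unfolding concept_le_def by blast
    thus "y \<in> \<Phi> c" using x y unfolding \<Phi>_def by blast
  qed
  have ord: "concept_le c1 c2 \<longleftrightarrow> \<Phi> c2 \<subseteq> \<Phi> c1" if c1: "c1 \<in> ?C" and c2: "c2 \<in> ?C" for c1 c2
  proof
    assume "concept_le c1 c2"
    hence "snd c2 \<subseteq> snd c1" using concept_le_iff[OF c1 c2] unfolding concept_le_def by blast
    thus "\<Phi> c2 \<subseteq> \<Phi> c1" unfolding \<Phi>_def by blast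
  next
    assume sub: "\<Phi> c2 \<subseteq> \<Phi> c1"
    have "snd c2 \<subseteq> snd c1"
    proof
      fix n assume n: "n \<in> snd c2"
      have nM: "n \<in> M" using n concept_eqs(2)[OF c2] by blast
      show "n \<in> snd c1"
      proof (rule L2[OF fin IGM c1 nM], intro ballI impI)
        fix d assume d: "d \<in> ?MIS" "int_der G I {n} \<subseteq> fst d"
        have dc: "d \<in> concepts G M I" using d(1) unfolding meet_irr_set_def by blast
        have "snd d \<subseteq> snd c2"
        proof
          fix k assume k: "k \<in> snd d"
          have kM: "k \<in> M" using k concept_eqs(2)[OF dc] by blast
          have sd: "snd d = ext_der M I (fst d)" using concept_eqs(3)[OF dc] by simp
          have "fst d \<subseteq> int_der G I {k}"
            using k concept_eqs(1)[OF dc] unfolding sd ext_der_def int_der_def by blast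
          thus "k \<in> snd c2" using L1[OF c2 n kM _ IGM] d(2) by blast
        qed
        hence "d \<in> \<Phi> c1" using sub d(1) unfolding \<Phi>_def by blast
        thus "snd d \<subseteq> snd c1" unfolding \<Phi>_def by blast
      qed
    qed
    thus "concept_le c1 c2" using concept_le_iff[OF c1 c2] unfolding concept_le_def by blast
  qed
  have inj: "inj_on \<Phi> ?C"
  proof (rule inj_onI)
    fix c1 c2 assume c1: "c1 \<in> ?C" and c2: "c2 \<in> ?C" and eq: "\<Phi> c1 = \<Phi> c2"
    have "fst c1 = fst c2" using ord[OF c1 c2] ord[OF c2 c1] eq unfolding concept_le_def by blast
    thus "c1 = c2" using concept_ext_eq[OF c1 c2] by blast
  qed
  have img: "\<Phi> ` ?C = BC_lattice (concepts G M I) concept_le"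
  proof
    show "\<Phi> ` ?C \<subseteq> BC_lattice (concepts G M I) concept_le" using into by blast
  next
    show "BC_lattice (concepts G M I) concept_le \<subseteq> \<Phi> ` ?C"
    proof
      fix F assume "F \<in> BC_lattice (concepts G M I) concept_le"
      from L3[OF fin IGM this] obtain c where "c \<in> ?C" "\<Phi> c = F" unfolding \<Phi>_def by blast
      thus "F \<in> \<Phi> ` ?C" by blast
    qed
  qed
  show ?thesis unfolding order_iso_def
    using inj img ord unfolding bij_betw_def by blast
qed

end
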